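(* Let $\Omega\subseteq\mathbb{R}^n$ be open, $u:\Omega\to\mathbb{R}^N$ continuous, $x\in\Omega$, $\xi\in\mathbb{S}^{N-1}$ and $P\in\mathbb{R}^{N\times n}$. The following are equivalent: (i) $P\in J^{1,\xi}u(x)$; (ii) there exists an increasing $\sigma\in C^1(0,\infty)$ with $\sigma(0^+)=0$ such that, as $z\to0$, $$\xi^\top\big(u(z+x)-u(x)-Pz\big)\le-\frac{|\xi^\perp(u(z+x)-u(x)-Pz)|^2}{\sigma(|z|)|z|}+\sigma(|z|)|z|.$$
   Context: For $a,b\in\mathbb{R}^N$, $a\vee b:=\frac12(a\otimes b+b\otimes a)$; matrix inequalities are in the sense of quadratic forms; $\xi^\perp:=I-\xi\otimes\xi$. First contact jet: $J^{1,\xi}u(x)$ is the set of $P\in\mathbb{R}^{N\times n}$ for which there is a continuous $T:\mathbb{R}^n\setminus\{0\}\to\mathbb{R}^{N\times N}_s$ (symmetric matrices) with $|T(y)|\to0$ as $y\to0$ and $\xi\vee[u(z)-u(x)-P(z-x)]\le|z-x|\,T(z-x)$ for all $z\ne x$ near $x$. "As $z\to0$" means for all $z\neq 0$ sufficiently small. *)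

theory Defs
  imports "HOL-Analysis.Analysis"
begin

definition outer :: "real^'m \<Rightarrow> real^'k \<Rightarrow> real^'k^'m" where
  "outer a b = (\<chi> i j. a $ i * b $ j)"

definition sym_prod :: "real^'m \<Rightarrow> real^'m \<Rightarrow> real^'m^'m" where
  "sym_prod a b = (1/2) *\<^sub>R (outer a b + outer b a)"

definition mat_le :: "real^'m^'m \<Rightarrow> real^'m^'m \<Rightarrow> bool" where
  "mat_le A B \<longleftrightarrow> (\<forall>v. v \<bullet> (A *v v) \<le> v \<bullet> (B *v v))"

definition perp :: "real^'m \<Rightarrow> real^'m^'m" where
  "perp \<xi> = mat 1 - outer \<xi> \<xi>"

text \<open>First contact jet J^{1,xi} u(x); matrices P have N rows ('m) and n columns ('n).\<close>
definition jet1 :: "real^'m \<Rightarrow> (real^'n \<Rightarrow> real^'m) \<Rightarrow> real^'n \<Rightarrow> (real^'n^'m) set" where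
  "jet1 \<xi> u x = {P. \<exists>T :: real^'n \<Rightarrow> real^'m^'m.
      (\<forall>y. y \<noteq> 0 \<longrightarrow> transpose (T y) = T y) \<and>
      continuous_on (UNIV - {0}) T \<and>
      (T \<longlongrightarrow> 0) (at 0) \<and>
      (\<forall>\<^sub>F z in at x. mat_le (sym_prod \<xi> (u z - u x - P *v (z - x))) (norm (z - x) *\<^sub>R T (z - x)))}"

end

theory Submission
  imports Defs "HOL-Analysis.Analysis"
begin


lemma outer_mult: "outer a b *v v = (b \<bullet> v) *\<^sub>R a"
  by (simp add: vec_eq_iff outer_def matrix_vector_mult_def inner_vec_def sum_distrib_left sum_distrib_right mult.assoc mult.left_commute mult.commute)

lemma mv_add: "((A::real^'n^'m) + B) *v v = A *v v + B *v v"
  by (simp add: vec_eq_iff matrix_vector_mult_def algebra_simps sum.distrib)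

lemma mv_scale: "((c::real) *\<^sub>R (A::real^'n^'m)) *v v = c *\<^sub>R (A *v v)"
  by (simp add: vec_eq_iff matrix_vector_mult_def algebra_simps sum_distrib_left)

lemma sym_quad: "v \<bullet> (sym_prod a b *v v) = (a \<bullet> v) * (b \<bullet> v)"
  by (simp add: sym_prod_def mv_add mv_scale outer_mult inner_add_right algebra_simps inner_commute)

lemma perp_mult: "perp \<xi> *v w = w - (\<xi> \<bullet> w) *\<^sub>R \<xi>"
  by (simp add: perp_def outer_mult matrix_vector_mult_diff_rdistrib)

lemma mat_le_quad: "v \<bullet> ((c *\<^sub>R (mat 1::real^'m^'m)) *v v) = c * (norm v)^2"
proof -
  have "(c *\<^sub>R (mat 1::real^'m^'m)) *v v = c *\<^sub>R v"
    by (simp add: mv_scale matrix_vector_mul_lid)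
  then show ?thesis by (simp add: power2_norm_eq_inner)
qed

lemma quad_bound: "v \<bullet> ((A::real^'m^'m) *v v) \<le> real CARD('m) * real CARD('m) * norm A * (norm v)^2"
proof -
  have "onorm ((*v) A) \<le> real CARD('m) * real CARD('m) * norm A"
    by (rule onorm_le_matrix_component) (rule order_trans[OF component_le_norm_cart Finite_Cartesian_Product.norm_nth_le])
  moreover have "norm (A *v v) \<le> onorm ((*v) A) * norm v"
    by (rule onorm) (simp add: matrix_vector_mul_linear)
  ultimately have "norm (A *v v) \<le> real CARD('m) * real CARD('m) * norm A * norm v"
    by (meson mult_right_mono norm_ge_zero order_trans)
  moreover have "v \<bullet> (A *v v) \<le> norm v * norm (A *v v)"
    by (meson Cauchy_Schwarz_ineq2 abs_le_D1 order_trans)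
  ultimately show ?thesis
    by (smt (verit, best) mult.commute mult.left_commute mult_left_mono norm_ge_zero power2_eq_square)
qed



lemma real_key2:
  fixes \<alpha> a X Bn Pn \<eta> :: real
  assumes "\<eta> > 0" "a \<le> - (Bn^2 / \<eta>) + \<eta>" "\<bar>X\<bar> \<le> Bn * Pn" "Bn \<ge> 0" "Pn \<ge> 0"
  shows "\<alpha> * (a * \<alpha> + X) \<le> \<eta> * (\<alpha>^2 + Pn^2)"
proof -
  have "0 \<le> (\<bar>\<alpha>\<bar> * Bn - \<eta> * Pn / 2)^2" by simp
  then have "\<eta> * (\<bar>\<alpha>\<bar> * Bn * Pn) \<le> \<alpha>^2 * Bn^2 + \<eta>^2 * Pn^2 / 4"
    by (simp add: power2_eq_square algebra_simps abs_mult_self_eq)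
  then have h1: "\<bar>\<alpha>\<bar> * Bn * Pn \<le> \<alpha>^2 * Bn^2 / \<eta> + \<eta> * Pn^2 / 4"
    using assms(1) by (simp add: field_simps power2_eq_square)
  have h2: "\<alpha> * X \<le> \<bar>\<alpha>\<bar> * Bn * Pn"
  proof -
    have "\<alpha> * X \<le> \<bar>\<alpha> * X\<bar>" by simp
    also have "\<dots> = \<bar>\<alpha>\<bar> * \<bar>X\<bar>" by (simp add: abs_mult)
    also have "\<dots> \<le> \<bar>\<alpha>\<bar> * (Bn * Pn)" using assms(3) by (simp add: mult_left_mono)
    finally show ?thesis by simp
  qed
  have h3: "\<alpha>^2 * a \<le> \<alpha>^2 * (- (Bn^2 / \<eta>) + \<eta>)"
    using assms(2) by (simp add: mult_left_mono)
  have "\<alpha> * (a * \<alpha> + X) = \<alpha>^2 * a + \<alpha> * X" by (simp add: power2_eq_square algebra_simps)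
  also have "\<dots> \<le> \<alpha>^2 * (- (Bn^2 / \<eta>) + \<eta>) + (\<alpha>^2 * Bn^2 / \<eta> + \<eta> * Pn^2 / 4)"
    using h1 h2 h3 by linarith
  also have "\<dots> = \<eta> * \<alpha>^2 + \<eta> * Pn^2 / 4" by (simp add: algebra_simps)
  also have "\<dots> \<le> \<eta> * (\<alpha>^2 + Pn^2)" using assms(1) by (simp add: algebra_simps)
  finally show ?thesis .
qed

lemma key2:
  fixes \<xi> w v :: "real^'m"
  assumes "norm \<xi> = 1" "\<eta> > 0"
    and "\<xi> \<bullet> w \<le> - ((norm (w - (\<xi> \<bullet> w) *\<^sub>R \<xi>))^2 / \<eta>) + \<eta>"
  shows "(\<xi> \<bullet> v) * (w \<bullet> v) \<le> \<eta> * (norm v)^2"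
proof -
  define a where "a = \<xi> \<bullet> w"
  define b where "b = w - a *\<^sub>R \<xi>"
  define \<alpha> where "\<alpha> = \<xi> \<bullet> v"
  define p where "p = v - \<alpha> *\<^sub>R \<xi>"
  have xx: "\<xi> \<bullet> \<xi> = 1" using assms(1) by (simp add: norm_eq_1)
  have bx: "b \<bullet> \<xi> = 0"
  proof -
    have "b \<bullet> \<xi> = w \<bullet> \<xi> - a * (\<xi> \<bullet> \<xi>)" by (simp add: b_def inner_diff_left)
    then show ?thesis by (simp add: xx a_def inner_commute[of w \<xi>])
  qed
  have px: "p \<bullet> \<xi> = 0"
  proof -
    have "p \<bullet> \<xi> = v \<bullet> \<xi> - \<alpha> * (\<xi> \<bullet> \<xi>)" by (simp add: p_def inner_diff_left)
    then show ?thesis by (simp add: xx \<alpha>_def inner_commute[of v \<xi>])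
  qed
  have wv: "w \<bullet> v = a * \<alpha> + b \<bullet> p"
  proof -
    have "w = a *\<^sub>R \<xi> + b" by (simp add: b_def)
    moreover have "v = \<alpha> *\<^sub>R \<xi> + p" by (simp add: p_def)
    ultimately have "w \<bullet> v = (a *\<^sub>R \<xi> + b) \<bullet> (\<alpha> *\<^sub>R \<xi> + p)" by simp
    also have "\<dots> = a * \<alpha> * (\<xi> \<bullet> \<xi>) + a * (\<xi> \<bullet> p) + \<alpha> * (b \<bullet> \<xi>) + b \<bullet> p"
      by (simp add: inner_add_left inner_add_right algebra_simps)
    finally show ?thesis using xx bx px by (simp add: inner_commute)
  qed
  have nv: "(norm v)^2 = \<alpha>^2 + (norm p)^2"
  proof -
    have "v = \<alpha> *\<^sub>R \<xi> + p" by (simp add: p_def)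
    then have "(norm v)^2 = (\<alpha> *\<^sub>R \<xi> + p) \<bullet> (\<alpha> *\<^sub>R \<xi> + p)" by (simp add: power2_norm_eq_inner)
    also have "\<dots> = \<alpha> * \<alpha> * (\<xi> \<bullet> \<xi>) + 2 * \<alpha> * (p \<bullet> \<xi>) + p \<bullet> p"
      by (simp add: inner_add_left inner_add_right algebra_simps inner_commute)
    finally show ?thesis using xx px by (simp add: power2_eq_square power2_norm_eq_inner[symmetric])
  qed
  have "\<bar>b \<bullet> p\<bar> \<le> norm b * norm p" by (rule Cauchy_Schwarz_ineq2)
  from real_key2[OF assms(2) _ this]
  have "\<alpha> * (a * \<alpha> + b \<bullet> p) \<le> \<eta> * (\<alpha>^2 + (norm p)^2)"
    using assms(3) by (simp add: a_def b_def)
  then show ?thesis by (simp add: wv nv \<alpha>_def)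
qed

lemma key1:
  fixes \<xi> w :: "real^'m"
  assumes "norm \<xi> = 1" "\<eta> > 0"
    and H: "\<And>v. (\<xi> \<bullet> v) * (w \<bullet> v) \<le> \<eta> / 4 * (norm v)^2"
  shows "\<xi> \<bullet> w \<le> - ((norm (w - (\<xi> \<bullet> w) *\<^sub>R \<xi>))^2 / \<eta>) + \<eta>"
proof -
  define a where "a = \<xi> \<bullet> w"
  define b where "b = w - a *\<^sub>R \<xi>"
  define B where "B = (norm b)^2"
  have xx: "\<xi> \<bullet> \<xi> = 1" using assms(1) by (simp add: norm_eq_1)
  have bx: "b \<bullet> \<xi> = 0"
  proof -
    have "b \<bullet> \<xi> = w \<bullet> \<xi> - a * (\<xi> \<bullet> \<xi>)" by (simp add: b_def inner_diff_left)
    then show ?thesis by (simp add: xx a_def inner_commute[of w \<xi>])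
  qed
  have wb: "w \<bullet> b = B"
  proof -
    have "w = a *\<^sub>R \<xi> + b" by (simp add: b_def)
    then have "w \<bullet> b = a * (\<xi> \<bullet> b) + b \<bullet> b" by (metis inner_add_left inner_scaleR_left)
    then show ?thesis using bx by (simp add: B_def power2_norm_eq_inner inner_commute)
  qed
  define t where "t = 2 / \<eta>"
  define v where "v = \<xi> + t *\<^sub>R b"
  have "\<xi> \<bullet> v = 1" using bx xx by (simp add: v_def inner_add_right inner_commute)
  moreover have "w \<bullet> v = a + t * B" using wb by (simp add: v_def inner_add_right a_def inner_commute)
  moreover have "(norm v)^2 = 1 + t^2 * B"
  proof -
    have "(norm v)^2 = v \<bullet> v" by (simp add: power2_norm_eq_inner)
    also have "\<dots> = \<xi> \<bullet> \<xi> + 2 * t * (b \<bullet> \<xi>) + t * t * (b \<bullet> b)"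
      by (simp add: v_def inner_add_left inner_add_right algebra_simps inner_commute)
    finally show ?thesis using xx bx by (simp add: B_def power2_eq_square dot_square_norm)
  qed
  ultimately have "a + t * B \<le> \<eta> / 4 * (1 + t^2 * B)" using H[of v] by simp
  then have "a + 2 * (B / \<eta>) \<le> \<eta> / 4 + B / \<eta>"
  proof -
    have "t * B = 2 * (B / \<eta>)" by (simp add: t_def)
    moreover have "\<eta> / 4 * (1 + t^2 * B) = \<eta> / 4 + B / \<eta>"
      using assms(2) by (simp add: t_def field_simps power2_eq_square)
    ultimately show ?thesis using \<open>a + t * B \<le> \<eta> / 4 * (1 + t^2 * B)\<close> by linarith
  qed
  then have "a \<le> \<eta> / 4 - B / \<eta>" by linarith
  then show ?thesis using assms(2) by (simp add: a_def[symmetric] b_def[symmetric] B_def)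
qed



locale hcon =
  fixes d r :: "'a \<Rightarrow> real" and Z :: "'a set" and B :: real
  assumes pos: "\<And>z. z \<in> Z \<Longrightarrow> 0 < r z"
    and dnn: "\<And>z. z \<in> Z \<Longrightarrow> 0 \<le> d z"
    and dB: "\<And>z. z \<in> Z \<Longrightarrow> d z \<le> B"
    and Bnn: "0 \<le> B"
    and lim: "\<And>\<epsilon>. \<epsilon> > 0 \<Longrightarrow> \<exists>\<rho>>0. \<forall>z\<in>Z. r z < \<rho> \<longrightarrow> d z < \<epsilon>"
begin

definition f :: "'a \<Rightarrow> real \<Rightarrow> real" where
  "f z t = d z * min 1 (max 0 t / r z)"

definition h :: "real \<Rightarrow> real" where
  "h t = Sup (insert 0 ((\<lambda>z. f z t) ` Z))"

lemma f_nn: "z \<in> Z \<Longrightarrow> 0 \<le> f z t"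
  using pos[of z] dnn[of z] by (simp add: f_def)

lemma f_le_d: "z \<in> Z \<Longrightarrow> f z t \<le> d z"
  using pos[of z] dnn[of z] by (simp add: f_def mult_left_le)

lemma f_B: "z \<in> Z \<Longrightarrow> f z t \<le> B"
  using f_le_d dB order_trans by blast

lemma bdd: "bdd_above (insert 0 ((\<lambda>z. f z t) ` Z))"
  using f_B Bnn by (auto intro!: bdd_aboveI[where M=B])

lemma h_upper: "z \<in> Z \<Longrightarrow> f z t \<le> h t"
  unfolding h_def by (rule cSup_upper) (use bdd in auto)

lemma h_nn: "0 \<le> h t"
  unfolding h_def by (rule cSup_upper) (use bdd in auto)

lemma h_least: "0 \<le> c \<Longrightarrow> (\<And>z. z \<in> Z \<Longrightarrow> f z t \<le> c) \<Longrightarrow> h t \<le> c"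
  unfolding h_def by (rule cSup_least) auto

lemma h_B: "h t \<le> B"
  by (rule h_least[OF Bnn f_B])

lemma h_d: "z \<in> Z \<Longrightarrow> r z \<le> t \<Longrightarrow> d z \<le> h t"
proof -
  assume z: "z \<in> Z" "r z \<le> t"
  then have "f z t = d z" using pos[of z] by (simp add: f_def)
  then show ?thesis using h_upper[OF z(1), of t] by simp
qed

lemma h_mono: "t \<le> t' \<Longrightarrow> h t \<le> h t'"
proof (rule h_least[OF h_nn])
  fix z assume "t \<le> t'" "z \<in> Z"
  have "max 0 t / r z \<le> max 0 t' / r z"
    using pos[of z] \<open>z \<in> Z\<close> \<open>t \<le> t'\<close> by (intro divide_right_mono) auto
  then have "min 1 (max 0 t / r z) \<le> min 1 (max 0 t' / r z)" by (simp add: min.coboundedI2)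
  then have "f z t \<le> f z t'"
    unfolding f_def using dnn[of z] \<open>z \<in> Z\<close> by (intro mult_left_mono) auto
  also have "\<dots> \<le> h t'" by (rule h_upper[OF \<open>z \<in> Z\<close>])
  finally show "f z t \<le> h t'" .
qed

lemma h_ratio: "0 < t \<Longrightarrow> t \<le> t' \<Longrightarrow> h t' \<le> (t' / t) * h t"
proof (rule h_least)
  assume "0 < t" "t \<le> t'"
  then show "0 \<le> t' / t * h t" using h_nn by simp
  fix z assume "z \<in> Z"
  have rz: "0 < r z" using pos[OF \<open>z \<in> Z\<close>] .
  have m: "min 1 (t' / r z) \<le> (t' / t) * min 1 (t / r z)"
  proof (cases "t \<le> r z")
    case True
    then have "min 1 (t / r z) = t / r z" using rz by simp
    then show ?thesis using \<open>0 < t\<close> by simp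
  next
    case False
    then have "min 1 (t / r z) = 1" using rz by simp
    moreover have "1 \<le> t' / t" using \<open>0 < t\<close> \<open>t \<le> t'\<close> by simp
    ultimately show ?thesis by simp
  qed
  have "f z t' = d z * min 1 (t' / r z)" using \<open>0 < t\<close> \<open>t \<le> t'\<close> by (simp add: f_def)
  also have "\<dots> \<le> d z * ((t' / t) * min 1 (t / r z))"
    by (rule mult_left_mono[OF m dnn[OF \<open>z \<in> Z\<close>]])
  also have "\<dots> = (t' / t) * f z t" using \<open>0 < t\<close> by (simp add: f_def)
  also have "\<dots> \<le> (t' / t) * h t"
    by (rule mult_left_mono[OF h_upper[OF \<open>z \<in> Z\<close>]]) (use \<open>0 < t\<close> \<open>t \<le> t'\<close> in simp)
  finally show "f z t' \<le> t' / t * h t" .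
qed

lemma h_lim: "\<epsilon> > 0 \<Longrightarrow> \<exists>\<delta>>0. \<forall>t. t < \<delta> \<longrightarrow> h t \<le> \<epsilon>"
proof -
  assume e: "\<epsilon> > 0"
  obtain \<rho> where \<rho>: "\<rho> > 0" "\<forall>z\<in>Z. r z < \<rho> \<longrightarrow> d z < \<epsilon>" using lim[OF e] by blast
  define \<delta> where "\<delta> = \<epsilon> / (B + 1) * \<rho>"
  have \<delta>: "\<delta> > 0" using e \<rho> Bnn by (simp add: \<delta>_def)
  have "h t \<le> \<epsilon>" if t: "t < \<delta>" for t
  proof (rule h_least)
    show "0 \<le> \<epsilon>" using e by simp
    fix z assume z: "z \<in> Z"
    have rz: "0 < r z" using pos[OF z] .
    show "f z t \<le> \<epsilon>"
    proof (cases "r z < \<rho>")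
      case True
      then show ?thesis using f_le_d[OF z, of t] \<rho>(2) z by fastforce
    next
      case False
      have "f z t \<le> d z * (max 0 t / r z)" unfolding f_def by (rule mult_left_mono[OF min.cobounded2 dnn[OF z]])
      also have "\<dots> \<le> B * (max 0 t / r z)"
        using dB[OF z] rz by (intro mult_right_mono) auto
      also have "\<dots> \<le> B * (max 0 t / \<rho>)"
        using False rz \<rho>(1) Bnn by (intro mult_left_mono divide_left_mono) auto
      also have "\<dots> \<le> B * (\<delta> / \<rho>)"
        using t \<rho>(1) Bnn \<delta> by (intro mult_left_mono divide_right_mono) auto
      also have "\<dots> = \<epsilon> * (B / (B + 1))"
      proof -
        have "B + 1 > 0" using Bnn by simp
        then have "\<delta> / \<rho> = \<epsilon> / (B + 1)" using \<rho>(1) by (simp add: \<delta>_def)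
        then show ?thesis by simp
      qed
      also have "\<dots> \<le> \<epsilon>"
      proof -
        have "B / (B + 1) \<le> 1" using Bnn by simp
        then show ?thesis using e by (simp add: mult_left_le del: times_divide_eq_right)
      qed
      finally show ?thesis .
    qed
  qed
  then show ?thesis using \<delta> by blast
qed

lemma h_cont: "continuous_on {0..} h"
  unfolding continuous_on_iff
proof (intro ballI allI impI)
  fix x e :: real assume x: "x \<in> {0..}" and e: "0 < e"
  show "\<exists>d>0. \<forall>x'\<in>{0..}. dist x' x < d \<longrightarrow> dist (h x') (h x) < e"
  proof (cases "x = 0")
    case True
    obtain \<delta> where \<delta>: "\<delta> > 0" "\<forall>t. t < \<delta> \<longrightarrow> h t \<le> e / 2" using h_lim[of "e/2"] e by auto
    have "h 0 \<le> e / 2" using \<delta> by auto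
    show ?thesis
    proof (intro exI[of _ \<delta>] conjI ballI impI)
      fix x' assume "x' \<in> {0..}" "dist x' x < \<delta>"
      then have "x' < \<delta>" using True by (simp add: dist_real_def)
      then have "h x' \<le> e / 2" using \<delta> by auto
      then show "dist (h x') (h x) < e"
        using \<open>h 0 \<le> e / 2\<close> h_nn[of x'] h_nn[of 0] e True by (simp add: dist_real_def)
    qed (use \<delta> in auto)
  next
    case False
    then have xp: "x > 0" using x by simp
    define \<delta> where "\<delta> = min (x / 2) (e * x / (2 * (B + 1)))"
    have \<delta>: "\<delta> > 0" using xp e Bnn by (simp add: \<delta>_def)
    show ?thesis
    proof (intro exI[of _ \<delta>] conjI ballI impI \<delta>)
      fix x' assume "x' \<in> {0..}" "dist x' x < \<delta>"
      then have d: "\<bar>x' - x\<bar> < \<delta>" by (simp add: dist_real_def)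
      have "\<delta> \<le> x / 2" unfolding \<delta>_def by (rule min.cobounded1)
      moreover have "x - x' < \<delta>" using d by (simp add: abs_less_iff)
      ultimately have x'p: "x' > x / 2" by linarith
      have dd: "\<bar>x' - x\<bar> * (B + 1) < e * x / 2"
      proof -
        have "\<bar>x' - x\<bar> < e * x / (2 * (B + 1))" using d by (simp add: \<delta>_def)
        then show ?thesis using Bnn by (simp add: field_simps)
      qed
      show "dist (h x') (h x) < e"
      proof (cases "x \<le> x'")
        case True
        have "h x' \<le> (x' / x) * h x" by (rule h_ratio[OF xp True])
        then have "h x' - h x \<le> (x' / x - 1) * h x" by (simp add: algebra_simps)
        also have "\<dots> \<le> (x' / x - 1) * B" using True xp h_B by (intro mult_left_mono) auto
        also have "\<dots> = (x' - x) * B / x" using xp by (simp add: field_simps)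
        also have "\<dots> < e" 
        proof -
          have "(x' - x) * B \<le> \<bar>x' - x\<bar> * (B + 1)" using True Bnn by (simp add: mult_left_mono)
          moreover have "e * x / 2 < e * x" using xp e by simp
          ultimately have "(x' - x) * B < e * x" using dd by linarith
          then show ?thesis using xp by (simp add: field_simps)
        qed
        finally show ?thesis using h_mono[OF True] by (simp add: dist_real_def)
      next
        case False
        have x'p': "x' > 0" using x'p xp by linarith
        have "h x \<le> (x / x') * h x'" by (rule h_ratio) (use x'p' False in auto)
        then have "h x - h x' \<le> (x / x' - 1) * h x'" by (simp add: algebra_simps)
        also have "\<dots> \<le> (x / x' - 1) * B" using False x'p' h_B by (intro mult_left_mono) auto
        also have "\<dots> = (x - x') * B / x'" using x'p' by (simp add: field_simps)
        also have "\<dots> < e" 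
        proof -
          have "(x - x') * B \<le> \<bar>x' - x\<bar> * (B + 1)" using False Bnn by (simp add: mult_left_mono)
          then have "(x - x') * B < e * x / 2" using dd by linarith
          also have "\<dots> < e * x'" using x'p e by simp
          finally show ?thesis using x'p' by (simp add: field_simps)
        qed
        finally show ?thesis using h_mono[of x' x] False by (simp add: dist_real_def)
      qed
    qed
  qed
qed

end



context hcon begin

definition K :: "real \<Rightarrow> real" where "K t = integral {0..t} h"

lemma h_int: "h integrable_on {a..b}" if "0 \<le> a" for a b
  by (rule integrable_continuous_real, rule continuous_on_subset[OF h_cont]) (use that in auto)

lemma K_deriv: "t > 0 \<Longrightarrow> (K has_real_derivative h t) (at t)"
proof -
  assume t: "t > 0"
  have "continuous_on {0..t+1} h" by (rule continuous_on_subset[OF h_cont]) auto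
  from integral_has_real_derivative[OF this, of t] t
  have "((\<lambda>x. integral {0..x} h) has_real_derivative h t) (at t within {0..t+1})" by simp
  moreover have "at t within {0..t+1} = at t" by (rule at_within_Icc_at) (use t in auto)
  ultimately show ?thesis by (simp add: K_def[abs_def])
qed

lemma K_nn: "0 \<le> K t"
  unfolding K_def by (rule integral_nonneg[OF h_int]) (auto simp: h_nn)

lemma K_le: "0 \<le> t \<Longrightarrow> K t \<le> t * h t"
proof -
  assume t: "0 \<le> t"
  have "K t \<le> integral {0..t} (\<lambda>_. h t)"
    unfolding K_def by (rule integral_le[OF h_int]) (auto intro: h_mono)
  also have "\<dots> = t * h t" using t by simp
  finally show ?thesis .
qed

lemma K_ge: "0 < t \<Longrightarrow> t * h t \<le> K (2 * t)"
proof -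
  assume t: "0 < t"
  have "K (2 * t) = integral {0..t} h + integral {t..2*t} h"
    unfolding K_def using Henstock_Kurzweil_Integration.integral_combine[where a=0 and c=t and b="2*t" and f=h] t h_int[of 0 "2*t"] by simp
  moreover have "0 \<le> integral {0..t} h" using K_nn[of t] by (simp add: K_def)
  moreover have "integral {t..2*t} (\<lambda>_. h t) \<le> integral {t..2*t} h"
    by (rule integral_le[OF _ h_int]) (use t in \<open>auto intro: h_mono\<close>)
  moreover have "integral {t..2*t} (\<lambda>_. h t) = t * h t" using t by simp
  ultimately show ?thesis by linarith
qed

definition sig :: "real \<Rightarrow> real" where "sig t = K (2 * t) / t + t"
definition sig' :: "real \<Rightarrow> real" where
  "sig' t = (h (2 * t) * (2 * 1) * t - K (2 * t) * 1) / (t * t) + 1"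

lemma sig_deriv: "t > 0 \<Longrightarrow> (sig has_real_derivative sig' t) (at t)"
proof -
  assume t: "t > 0"
  have d2: "((\<lambda>x. 2 * x) has_real_derivative 2 * 1) (at t)" by (rule DERIV_cmult[OF DERIV_ident])
  have dk: "((\<lambda>x. K (2 * x)) has_real_derivative h (2 * t) * (2 * 1)) (at t)"
    by (rule DERIV_chain2[OF K_deriv d2]) (use t in simp)
  have "((\<lambda>x. K (2 * x) / x) has_real_derivative (h (2 * t) * (2 * 1) * t - K (2 * t) * 1) / (t * t)) (at t)"
    by (rule DERIV_divide[OF dk DERIV_ident]) (use t in simp)
  from DERIV_add[OF this DERIV_ident] show ?thesis
    by (simp add: sig_def[abs_def] sig'_def)
qed

lemma sig'_pos: "t > 0 \<Longrightarrow> sig' t > 0"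
proof -
  assume t: "t > 0"
  have "K (2 * t) \<le> 2 * t * h (2 * t)" using K_le[of "2 * t"] t by simp
  then have "0 \<le> (h (2 * t) * (2 * 1) * t - K (2 * t) * 1) / (t * t)"
    using t by (simp add: algebra_simps)
  then show ?thesis by (simp add: sig'_def)
qed

lemma sig'_cont: "continuous_on {0<..} sig'"
proof -
  have c1: "continuous_on {0<..} (\<lambda>t. h (2 * t))"
    by (rule continuous_on_compose2[OF h_cont]) (auto intro!: continuous_intros)
  have cK: "continuous_on {0<..} K"
    by (rule continuous_at_imp_continuous_on) (auto intro: DERIV_isCont K_deriv)
  have c2: "continuous_on {0<..} (\<lambda>t. K (2 * t))"
    by (rule continuous_on_compose2[OF cK]) (auto intro!: continuous_intros)
  show ?thesis unfolding sig'_def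
    by (intro continuous_intros c1 c2) auto
qed

lemma sig_mono: "strict_mono_on {0<..} sig"
  unfolding strict_mono_on_def
proof (intro allI impI)
  fix a b :: real assume "a \<in> {0<..} \<and> b \<in> {0<..} \<and> a < b"
  then have ab: "0 < a" "a < b" by auto
  show "sig a < sig b"
  proof (rule DERIV_pos_imp_increasing[OF ab(2)])
    fix x assume "a \<le> x" "x \<le> b"
    then have "x > 0" using ab by simp
    then show "\<exists>y. (sig has_real_derivative y) (at x) \<and> 0 < y"
      using sig_deriv sig'_pos by blast
  qed
qed

lemma sig_lim: "(sig \<longlongrightarrow> 0) (at_right 0)"
proof (rule tendstoI)
  fix e :: real assume e: "e > 0"
  obtain \<delta> where \<delta>: "\<delta> > 0" "\<forall>t. t < \<delta> \<longrightarrow> h t \<le> e / 4" using h_lim[of "e/4"] e by auto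
  show "\<forall>\<^sub>F x in at_right 0. dist (sig x) 0 < e"
    unfolding eventually_at_right_field
  proof (intro exI[of _ "min (\<delta>/2) (e/2)"] conjI allI impI)
    show "0 < min (\<delta>/2) (e/2)" using \<delta> e by simp
    fix t :: real assume "0 < t" "t < min (\<delta> / 2) (e / 2)"
    then have t: "0 < t" "2 * t < \<delta>" "t < e / 2" by auto
    have "K (2 * t) \<le> 2 * t * h (2 * t)" using K_le[of "2 * t"] t by simp
    also have "\<dots> \<le> 2 * t * (e / 4)" using \<delta>(2) t by (intro mult_left_mono) auto
    finally have k1: "K (2 * t) / t \<le> e / 2" using t(1) by (simp add: field_simps)
    have k2: "0 \<le> K (2 * t) / t" using K_nn t(1) by simp
    have "sig t = K (2 * t) / t + t" by (simp add: sig_def)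
    then have "0 \<le> sig t" "sig t < e" using k1 k2 t by linarith+
    then show "dist (sig t) 0 < e" by (simp add: dist_real_def)
  qed
qed

lemma sig_ge: "z \<in> Z \<Longrightarrow> d z \<le> sig (r z)"
proof -
  assume z: "z \<in> Z"
  define t where "t = r z"
  have t: "t > 0" using pos[OF z] by (simp add: t_def)
  have "d z \<le> h t" using h_d[OF z] by (simp add: t_def)
  also have "\<dots> \<le> K (2 * t) / t" using K_ge[OF t] t by (simp add: field_simps)
  also have "\<dots> \<le> sig t" using t by (simp add: sig_def)
  finally show ?thesis by (simp add: t_def)
qed

lemma sigma_exists:
  "\<exists>\<sigma> :: real \<Rightarrow> real. strict_mono_on {0<..} \<sigma> \<and>
     (\<exists>\<sigma>'. continuous_on {0<..} \<sigma>' \<and> (\<forall>t>0. (\<sigma> has_real_derivative \<sigma>' t) (at t))) \<and>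
     (\<sigma> \<longlongrightarrow> 0) (at_right 0) \<and> (\<forall>z\<in>Z. d z \<le> \<sigma> (r z))"
  using sig_mono sig'_cont sig_deriv sig_lim sig_ge by blast

end



lemma sigma_pos:
  fixes \<sigma> :: "real \<Rightarrow> real"
  assumes "strict_mono_on {0<..} \<sigma>" "(\<sigma> \<longlongrightarrow> 0) (at_right 0)" "t > 0"
  shows "\<sigma> t > 0"
proof -
  have "eventually (\<lambda>s. \<sigma> (t/2) \<ge> \<sigma> s) (at_right 0)"
    unfolding eventually_at_right_field
    using assms(1,3) by (intro exI[of _ "t/2"]) (auto simp: strict_mono_on_def intro: less_imp_le)
  then have "0 \<le> \<sigma> (t/2)" by (rule tendsto_upperbound[OF assms(2)]) simp
  moreover have "\<sigma> (t/2) < \<sigma> t" using assms(1,3) by (auto simp: strict_mono_on_def)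
  ultimately show ?thesis by simp
qed

lemma transpose_smat: "transpose (c *\<^sub>R (mat 1 :: real^'m^'m)) = c *\<^sub>R mat 1"
  by (simp add: vec_eq_iff transpose_def mat_def)

lemma norm_at_right: "filterlim (\<lambda>y::'a::real_normed_vector. norm y) (at_right 0) (at 0)"
  unfolding filterlim_at
  by (auto simp: eventually_at intro!: exI[of _ 1] tendsto_norm_zero tendsto_ident_at)



theorem theorem26:
  fixes \<Omega> :: "(real^'n) set" and u :: "real^'n \<Rightarrow> real^'m"
    and x :: "real^'n" and \<xi> :: "real^'m" and P :: "real^'n^'m"
  assumes "open \<Omega>" and "continuous_on \<Omega> u" and "x \<in> \<Omega>" and "norm \<xi> = 1"
  shows "P \<in> jet1 \<xi> u x \<longleftrightarrow>
    (\<exists>\<sigma> :: real \<Rightarrow> real.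
       strict_mono_on {0<..} \<sigma> \<and>
       (\<exists>\<sigma>'. continuous_on {0<..} \<sigma>' \<and> (\<forall>t>0. (\<sigma> has_real_derivative \<sigma>' t) (at t))) \<and>
       (\<sigma> \<longlongrightarrow> 0) (at_right 0) \<and>
       (\<forall>\<^sub>F z in at 0.
          \<xi> \<bullet> (u (z + x) - u x - P *v z)
            \<le> - ((norm (perp \<xi> *v (u (z + x) - u x - P *v z)))\<^sup>2 / (\<sigma> (norm z) * norm z))
              + \<sigma> (norm z) * norm z))"
  (is "?L \<longleftrightarrow> ?R")
proof
  assume ?L
  then obtain T :: "real^'n \<Rightarrow> real^'m^'m" where
    Tlim: "(T \<longlongrightarrow> 0) (at 0)" and
    Tev: "\<forall>\<^sub>F z in at x. mat_le (sym_prod \<xi> (u z - u x - P *v (z - x))) (norm (z - x) *\<^sub>R T (z - x))"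
    unfolding jet1_def by blast
  define c where "c = real CARD('m) * real CARD('m)"
  have c: "c > 0" by (simp add: c_def)
  obtain \<rho>1 where \<rho>1: "\<rho>1 > 0" "\<And>y. y \<noteq> 0 \<Longrightarrow> norm y < \<rho>1 \<Longrightarrow> norm (T y) < 1"
    using Tlim[THEN tendstoD, of 1] by (auto simp: eventually_at dist_norm)
  obtain \<rho>2 where \<rho>2: "\<rho>2 > 0" "\<And>z. z \<noteq> x \<Longrightarrow> dist z x < \<rho>2 \<Longrightarrow>
      mat_le (sym_prod \<xi> (u z - u x - P *v (z - x))) (norm (z - x) *\<^sub>R T (z - x))"
    using Tev by (auto simp: eventually_at)
  define R where "R = min \<rho>1 \<rho>2"
  define Z where "Z = {y :: real^'n. y \<noteq> 0 \<and> norm y < R}"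
  define d where "d y = 4 * c * norm (T y)" for y
  interpret hcon d norm Z "4 * c"
  proof
    fix z assume "z \<in> Z"
    then show "0 < norm z" "0 \<le> d z" using c by (auto simp: Z_def d_def)
    have "norm (T z) < 1" using \<rho>1(2)[of z] \<open>z \<in> Z\<close> by (auto simp: Z_def R_def)
    then show "d z \<le> 4 * c" using c by (simp add: d_def)
  next
    show "0 \<le> 4 * c" using c by simp
  next
    fix \<epsilon> :: real assume e: "\<epsilon> > 0"
    obtain \<rho> where \<rho>: "\<rho> > 0" "\<And>y. y \<noteq> 0 \<Longrightarrow> norm y < \<rho> \<Longrightarrow> norm (T y) < \<epsilon> / (4 * c)"
      using Tlim[THEN tendstoD, of "\<epsilon> / (4 * c)"] e c by (auto simp: eventually_at dist_norm)
    show "\<exists>\<rho>>0. \<forall>z\<in>Z. norm z < \<rho> \<longrightarrow> d z < \<epsilon>"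
    proof (intro exI[of _ \<rho>] conjI ballI impI \<rho>(1))
      fix z assume "z \<in> Z" "norm z < \<rho>"
      then have "norm (T z) < \<epsilon> / (4 * c)" using \<rho>(2) by (auto simp: Z_def)
      then show "d z < \<epsilon>" using c by (simp add: d_def field_simps)
    qed
  qed
  obtain \<sigma> :: "real \<Rightarrow> real" where \<sigma>: "strict_mono_on {0<..} \<sigma>"
    "\<exists>\<sigma>'. continuous_on {0<..} \<sigma>' \<and> (\<forall>t>0. (\<sigma> has_real_derivative \<sigma>' t) (at t))"
    "(\<sigma> \<longlongrightarrow> 0) (at_right 0)" "\<forall>z\<in>Z. d z \<le> \<sigma> (norm z)"
    using sigma_exists by blast
  have "\<forall>\<^sub>F z in at 0.
          \<xi> \<bullet> (u (z + x) - u x - P *v z)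
            \<le> - ((norm (perp \<xi> *v (u (z + x) - u x - P *v z)))\<^sup>2 / (\<sigma> (norm z) * norm z))
              + \<sigma> (norm z) * norm z"
    unfolding eventually_at
  proof (intro exI[of _ R] conjI ballI impI)
    show "R > 0" using \<rho>1 \<rho>2 by (simp add: R_def)
    fix z :: "real^'n" assume "z \<in> UNIV" and zz: "z \<noteq> 0 \<and> dist z 0 < R"
    then have zZ: "z \<in> Z" by (simp add: Z_def)
    define w where "w = u (z + x) - u x - P *v z"
    have nz: "norm z > 0" using zz by simp
    have sp: "\<sigma> (norm z) > 0" using sigma_pos[OF \<sigma>(1,3) nz] .
    define \<eta> where "\<eta> = \<sigma> (norm z) * norm z"
    have \<eta>: "\<eta> > 0" using sp nz by (simp add: \<eta>_def)
    have ml: "mat_le (sym_prod \<xi> w) (norm z *\<^sub>R T z)"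
      using \<rho>2(2)[of "z + x"] zz by (simp add: R_def w_def dist_norm)
    have H: "(\<xi> \<bullet> v) * (w \<bullet> v) \<le> \<eta> / 4 * (norm v)^2" for v
    proof -
      have "(\<xi> \<bullet> v) * (w \<bullet> v) = v \<bullet> (sym_prod \<xi> w *v v)" by (simp add: sym_quad)
      also have "\<dots> \<le> v \<bullet> ((norm z *\<^sub>R T z) *v v)" using ml by (simp add: mat_le_def)
      also have "\<dots> = norm z * (v \<bullet> (T z *v v))" by (simp add: mv_scale)
      also have "\<dots> \<le> norm z * (c * norm (T z) * (norm v)^2)"
        using quad_bound[of v "T z"] nz by (intro mult_left_mono) (auto simp: c_def)
      also have "\<dots> = norm z * (d z / 4 * (norm v)^2)" by (simp add: d_def)
      also have "\<dots> \<le> norm z * (\<sigma> (norm z) / 4 * (norm v)^2)"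
        using \<sigma>(4) zZ nz by (intro mult_left_mono mult_right_mono divide_right_mono) auto
      also have "\<dots> = \<eta> / 4 * (norm v)^2" by (simp add: \<eta>_def)
      finally show ?thesis .
    qed
    from key1[OF assms(4) \<eta> H]
    show "\<xi> \<bullet> (u (z + x) - u x - P *v z)
            \<le> - ((norm (perp \<xi> *v (u (z + x) - u x - P *v z)))\<^sup>2 / (\<sigma> (norm z) * norm z))
              + \<sigma> (norm z) * norm z"
      by (simp add: perp_mult w_def \<eta>_def)
  qed
  with \<sigma>(1,2,3) show ?R by blast
next
  assume ?R
  then obtain \<sigma> :: "real \<Rightarrow> real" and \<sigma>' where \<sigma>: "strict_mono_on {0<..} \<sigma>"
    "continuous_on {0<..} \<sigma>'" "\<forall>t>0. (\<sigma> has_real_derivative \<sigma>' t) (at t)"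
    "(\<sigma> \<longlongrightarrow> 0) (at_right 0)" and
    ev: "\<forall>\<^sub>F z in at 0.
          \<xi> \<bullet> (u (z + x) - u x - P *v z)
            \<le> - ((norm (perp \<xi> *v (u (z + x) - u x - P *v z)))\<^sup>2 / (\<sigma> (norm z) * norm z))
              + \<sigma> (norm z) * norm z"
    by blast
  define T :: "real^'n \<Rightarrow> real^'m^'m" where "T y = \<sigma> (norm y) *\<^sub>R mat 1" for y
  have sc: "continuous_on {0<..} \<sigma>"
    by (rule continuous_at_imp_continuous_on) (use \<sigma>(3) DERIV_isCont in auto)
  have c1: "continuous_on (UNIV - {0}) (\<lambda>y::real^'n. \<sigma> (norm y))"
    by (rule continuous_on_compose2[OF sc]) (auto intro!: continuous_intros)
  have c2: "continuous_on (UNIV - {0}) T"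
    unfolding T_def by (intro continuous_intros c1)
  have l1: "((\<lambda>y::real^'n. \<sigma> (norm y)) \<longlongrightarrow> 0) (at 0)"
    by (rule filterlim_compose[OF \<sigma>(4) norm_at_right])
  have l2: "(T \<longlongrightarrow> 0) (at 0)"
    unfolding T_def using tendsto_scaleR[OF l1 tendsto_const[of "mat 1 :: real^'m^'m"]] by simp
  have sym: "\<forall>y. y \<noteq> 0 \<longrightarrow> transpose (T y) = T y" by (simp add: T_def transpose_smat)
  have ev0: "\<forall>\<^sub>F z in at 0. mat_le (sym_prod \<xi> (u (z + x) - u x - P *v (z + x - x))) (norm (z + x - x) *\<^sub>R T (z + x - x))"
    using ev unfolding eventually_at
  proof (elim exE conjE, intro exI conjI ballI impI)
    fix \<delta> :: real assume \<delta>: "\<delta> > 0" and H: "\<forall>z\<in>UNIV. z \<noteq> 0 \<and> dist z 0 < \<delta> \<longrightarrow>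
          \<xi> \<bullet> (u (z + x) - u x - P *v z)
            \<le> - ((norm (perp \<xi> *v (u (z + x) - u x - P *v z)))\<^sup>2 / (\<sigma> (norm z) * norm z))
              + \<sigma> (norm z) * norm z"
    show "\<delta> > 0" by (rule \<delta>)
    fix z :: "real^'n" assume "z \<in> UNIV" "z \<noteq> 0 \<and> dist z 0 < \<delta>"
    then have zz: "z \<noteq> 0" "dist z 0 < \<delta>" by auto
    define w where "w = u (z + x) - u x - P *v z"
    have nz: "norm z > 0" using zz by simp
    have sp: "\<sigma> (norm z) > 0" using sigma_pos[OF \<sigma>(1,4) nz] .
    define \<eta> where "\<eta> = \<sigma> (norm z) * norm z"
    have \<eta>: "\<eta> > 0" using sp nz by (simp add: \<eta>_def)
    have ineq: "\<xi> \<bullet> w \<le> - ((norm (w - (\<xi> \<bullet> w) *\<^sub>R \<xi>))^2 / \<eta>) + \<eta>"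
      using H zz by (simp add: w_def \<eta>_def perp_mult)
    show "mat_le (sym_prod \<xi> (u (z + x) - u x - P *v (z + x - x))) (norm (z + x - x) *\<^sub>R T (z + x - x))"
      unfolding mat_le_def
    proof
      fix v :: "real^'m"
      have "v \<bullet> (sym_prod \<xi> w *v v) = (\<xi> \<bullet> v) * (w \<bullet> v)" by (rule sym_quad)
      also have "\<dots> \<le> \<eta> * (norm v)^2" by (rule key2[OF assms(4) \<eta> ineq])
      also have "\<dots> = v \<bullet> ((\<eta> *\<^sub>R (mat 1 :: real^'m^'m)) *v v)" by (rule mat_le_quad[symmetric])
      also have "(\<eta> *\<^sub>R (mat 1 :: real^'m^'m)) = norm z *\<^sub>R T z"
        by (simp add: T_def \<eta>_def mult.commute)
      finally show "v \<bullet> (sym_prod \<xi> (u (z + x) - u x - P *v (z + x - x)) *v v)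
          \<le> v \<bullet> ((norm (z + x - x) *\<^sub>R T (z + x - x)) *v v)" by (simp add: w_def)
    qed
  qed
  have "\<forall>\<^sub>F z in at x. mat_le (sym_prod \<xi> (u z - u x - P *v (z - x))) (norm (z - x) *\<^sub>R T (z - x))"
    unfolding at_to_0[of x] eventually_filtermap using ev0 .
  then show ?L unfolding jet1_def using sym c2 l2 by blast
qed


end
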